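(* For integers $k\ge1$ and $n\ge1$, let $c(k,n)$ be the minimum, over all deterministic algorithms that sort $n$ elements in the rank query model in $k$ rounds, of the maximum over inputs of the total number of queries asked. Then $$c(k,n)\ \ge\ \frac{k}{2e}\,n^{1+1/k}-kn.$$
   Context: Rank query model for sorting: there are $n$ items $x_1,\ldots,x_n$ whose ranks $\mathrm{rank}(x_1),\ldots,\mathrm{rank}(x_n)$ form an unknown permutation of $\{1,\ldots,n\}$. A query is a pair $(i,m)$ with $i,m\in\{1,\ldots,n\}$ and asks "How is $\mathrm{rank}(x_i)$ compared to $m$?", with answer "$<$", "$=$" or "$>$". Sorting means determining the rank of every item. An algorithm runs in $k$ rounds if in each of $k$ rounds it submits a set of queries chosen depending only on answers of earlier rounds, then receives all their answers. *)

theory Defs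
  imports Complex_Main
begin

text \<open>Items are indexed by 1..n; an input is a permutation
  of ranks, represented as a function r with r restricted to {1..n} a bijection
  onto {1..n}, and r i = 0 outside {1..n} (canonical representative).\<close>

datatype answer = Lt | Eq | Gt

definition inputs :: "nat \<Rightarrow> (nat \<Rightarrow> nat) set" where
  "inputs n = {r. bij_betw r {1..n} {1..n} \<and> (\<forall>i. i \<notin> {1..n} \<longrightarrow> r i = 0)}"

fun ans :: "(nat \<Rightarrow> nat) \<Rightarrow> nat \<times> nat \<Rightarrow> answer" where
  "ans r (i, m) = (if r i < m then Lt else if r i = m then Eq else Gt)"

text \<open>A deterministic adaptive algorithm: in round j it submits the query set
  A j H, where H is the partial map of all answers received in earlier rounds.\<close>

type_synonym algorithm = "nat \<Rightarrow> ((nat \<times> nat) \<Rightarrow> answer option) \<Rightarrow> (nat \<times> nat) set"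

fun hist :: "algorithm \<Rightarrow> (nat \<Rightarrow> nat) \<Rightarrow> nat \<Rightarrow> ((nat \<times> nat) \<Rightarrow> answer option)" where
  "hist A r 0 = Map.empty"
| "hist A r (Suc j) = hist A r j ++
      (\<lambda>q. if q \<in> A j (hist A r j) then Some (ans r q) else None)"

definition cost :: "algorithm \<Rightarrow> (nat \<Rightarrow> nat) \<Rightarrow> nat \<Rightarrow> nat" where
  "cost A r k = (\<Sum>j<k. card (A j (hist A r j)))"

definition sorts_in_rounds :: "nat \<Rightarrow> nat \<Rightarrow> algorithm \<Rightarrow> bool" where
  "sorts_in_rounds n k A \<longleftrightarrow>
     (\<forall>j H. A j H \<subseteq> {1..n} \<times> {1..n}) \<and>
     (\<forall>r\<in>inputs n. \<forall>r'\<in>inputs n. hist A r k = hist A r' k \<longrightarrow> r = r')"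

definition worst_cost :: "nat \<Rightarrow> nat \<Rightarrow> algorithm \<Rightarrow> nat" where
  "worst_cost n k A = Max ((\<lambda>r. cost A r k) ` inputs n)"

definition c :: "nat \<Rightarrow> nat \<Rightarrow> nat" where
  "c k n = Inf {worst_cost n k A | A. sorts_in_rounds n k A}"

end

theory Submission
  imports Defs "HOL-Combinatorics.Permutations" "HOL-Library.FuncSet"
begin


lemma inputs_bij:
  "bij_betw (\<lambda>r i. if i \<in> {1..n} then r i else i) (inputs n) {p. p permutes {1..n}}"
proof (rule bij_betw_byWitness[where f'="\<lambda>p i. if i \<in> {1..n} then p i else 0"])
  show "\<forall>a\<in>inputs n. (\<lambda>i. if i \<in> {1..n} then (if i \<in> {1..n} then a i else i) else 0) = a"
    by (auto simp: inputs_def)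
  show "\<forall>b\<in>{p. p permutes {1..n}}. (\<lambda>i. if i \<in> {1..n} then (if i \<in> {1..n} then b i else 0) else i) = b"
    by (auto simp: permutes_def fun_eq_iff)
  show "(\<lambda>r i. if i \<in> {1..n} then r i else i) ` inputs n \<subseteq> {p. p permutes {1..n}}"
  proof safe
    fix r assume "r \<in> inputs n"
    then have "bij_betw r {1..n} {1..n}" by (simp add: inputs_def)
    then have "bij_betw (\<lambda>i. if i \<in> {1..n} then r i else i) {1..n} {1..n}"
      by (rule bij_betw_cong[THEN iffD1, rotated]) auto
    then show "(\<lambda>i. if i \<in> {1..n} then r i else i) permutes {1..n}"
      by (rule bij_imp_permutes) auto
  qed
  show "(\<lambda>p i. if i \<in> {1..n} then p i else 0) ` {p. p permutes {1..n}} \<subseteq> inputs n"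
  proof safe
    fix p assume "p permutes {1..n}"
    then have "bij_betw p {1..n} {1..n}" by (rule permutes_imp_bij)
    then have "bij_betw (\<lambda>i. if i \<in> {1..n} then p i else 0) {1..n} {1..n}"
      by (rule bij_betw_cong[THEN iffD1, rotated]) auto
    then show "(\<lambda>i. if i \<in> {1..n} then p i else 0) \<in> inputs n"
      by (auto simp: inputs_def)
  qed
qed

lemma finite_inputs: "finite (inputs n)"
  using bij_betw_finite[OF inputs_bij] finite_permutations[of "{1..n}"] by simp

lemma card_inputs: "card (inputs n) = fact n"
  using bij_betw_same_card[OF inputs_bij] card_permutations[of "{1..n}" n] by simp

lemma pow_le_exp_fact: "(x::real) \<ge> 0 \<Longrightarrow> x ^ n / fact n \<le> exp x"
proof -
  assume x: "x \<ge> 0"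
  have s: "(\<lambda>i. x^i / fact i) sums exp x" using exp_converges[of x] by (simp add: divide_inverse_commute scaleR_conv_of_real)
  have "(\<Sum>i\<in>{n}. x^i / fact i) \<le> suminf (\<lambda>i. x^i / fact i)"
    by (rule sum_le_suminf) (use s x in \<open>auto simp: sums_iff\<close>)
  then show ?thesis using s by (simp add: sums_iff)
qed

lemma ln_fact_ge: "ln (fact n) \<ge> real n * ln (real n) - real n"
proof (cases "n = 0")
  case True then show ?thesis by simp
next
  case False
  have "real n ^ n / fact n \<le> exp (real n)" by (rule pow_le_exp_fact) simp
  then have "real n ^ n \<le> exp (real n) * fact n" by (simp add: divide_le_eq)
  then have "ln (real n ^ n) \<le> ln (exp (real n) * fact n)"
    using False by (subst ln_le_cancel_iff) auto
  then show ?thesis using False by (simp add: ln_mult ln_realpow)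
qed




definition code :: "nat set \<Rightarrow> nat \<Rightarrow> nat + nat" where
  "code M v = (if v \<in> M then Inl v else Inr (card {m\<in>M. m < v}))"

definition codes :: "nat set \<Rightarrow> (nat + nat) set" where
  "codes M = Inl ` M \<union> Inr ` {0..card M}"

lemma code_in: "finite M \<Longrightarrow> code M v \<in> codes M"
  unfolding code_def codes_def
  by (auto intro!: imageI card_mono)

lemma card_codes: "finite M \<Longrightarrow> card (codes M) \<le> 2 * card M + 1"
proof -
  assume "finite M"
  have "card (codes M) \<le> card (Inl ` M :: (nat+nat) set) + card (Inr ` {0..card M} :: (nat+nat) set)"
    unfolding codes_def by (rule card_Un_le)
  also have "\<dots> \<le> card M + card {0..card M}" by (intro add_mono card_image_le) (auto simp: \<open>finite M\<close>)
  finally show ?thesis by simp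
qed

lemma code_eq_aux:
  assumes "finite M" "code M v = code M w" "v \<notin> M" "w \<notin> M" "v < w" "m \<in> M"
  shows "(v < m \<longleftrightarrow> w < m)"
proof -
  have c: "card {m\<in>M. m < v} = card {m\<in>M. m < w}" using assms(2-4) by (simp add: code_def)
  have E: "{m\<in>M. m < v} = {m\<in>M. m < w}"
    by (rule card_subset_eq) (use assms c in auto)
  have mv: "m \<noteq> w" using assms by auto
  show ?thesis
  proof
    assume vm: "v < m"
    show "w < m"
    proof (rule ccontr)
      assume "\<not> w < m"
      then have "m < w" using mv by simp
      then have "m \<in> {m\<in>M. m < w}" using assms by simp
      then have "m \<in> {m\<in>M. m < v}" by (simp only: E)
      then show False using vm by simp
    qed
  next
    assume "w < m" then show "v < m" using assms by simp
  qed
qed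

lemma code_eq:
  assumes "finite M" "code M v = code M w" "m \<in> M"
  shows "(v < m \<longleftrightarrow> w < m) \<and> (v = m \<longleftrightarrow> w = m)"
proof (cases "v \<in> M")
  case True
  then have "w = v" using assms by (auto simp: code_def split: if_splits)
  then show ?thesis by simp
next
  case False
  then have w: "w \<notin> M" using assms by (auto simp: code_def split: if_splits)
  have ne: "v \<noteq> m" "w \<noteq> m" using False w assms by auto
  consider "v < w" | "v = w" | "w < v" by linarith
  then show ?thesis
  proof cases
    case 1 then show ?thesis using code_eq_aux[OF assms(1,2) False w 1 assms(3)] ne by simp
  next
    case 2 then show ?thesis by simp
  next
    case 3 then show ?thesis using code_eq_aux[OF assms(1) assms(2)[symmetric] w False 3 assms(3)] ne by simp
  qed
qed

lemma pigeon:
  assumes "finite C" "finite T" "g ` C \<subseteq> T" "C \<noteq> {}"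
  shows "\<exists>x\<in>C. card C \<le> card {y\<in>C. g y = g x} * card T"
proof (rule ccontr)
  assume "\<not> ?thesis"
  then have lt: "\<And>x. x \<in> C \<Longrightarrow> card {y\<in>C. g y = g x} * card T < card C" by force
  have e: "C = (\<Union>t\<in>g`C. {y\<in>C. g y = t})" by auto
  have "card C = card (\<Union>t\<in>g`C. {y\<in>C. g y = t})" using e by (rule arg_cong)
  also have "\<dots> \<le> (\<Sum>t\<in>g`C. card {y\<in>C. g y = t})"
    by (rule card_UN_le) (use assms(1) in simp)
  finally have "card C \<le> (\<Sum>t\<in>g`C. card {y\<in>C. g y = t})" .
  then have "card C * card T \<le> (\<Sum>t\<in>g`C. card {y\<in>C. g y = t} * card T)"
    by (simp add: sum_distrib_right[symmetric])
  also have "\<dots> < (\<Sum>t\<in>g`C. card C)"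
    by (rule sum_strict_mono) (use assms lt in auto)
  also have "\<dots> = card (g`C) * card C" by simp
  also have "\<dots> \<le> card T * card C" using assms by (simp add: card_mono)
  finally show False by simp
qed

definition cls :: "nat \<Rightarrow> algorithm \<Rightarrow> nat \<Rightarrow> (nat\<Rightarrow>nat) \<Rightarrow> (nat\<Rightarrow>nat) set" where
  "cls n A j r = {r' \<in> inputs n. \<forall>j'\<le>j. hist A r' j' = hist A r j'}"

definition qs :: "algorithm \<Rightarrow> nat \<Rightarrow> ((nat \<times> nat) \<Rightarrow> answer option) \<Rightarrow> nat \<Rightarrow> nat set" where
  "qs A j H i = {m. (i,m) \<in> A j H}"

definition W :: "nat \<Rightarrow> algorithm \<Rightarrow> nat \<Rightarrow> ((nat \<times> nat) \<Rightarrow> answer option) \<Rightarrow> nat" where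
  "W n A j H = (\<Prod>i\<in>{1..n}. 2 * card (qs A j H i) + 1)"

definition P :: "nat \<Rightarrow> algorithm \<Rightarrow> nat \<Rightarrow> (nat\<Rightarrow>nat) \<Rightarrow> nat" where
  "P n A j r = (\<Prod>j'<j. W n A j' (hist A r j'))"

lemma adversary:
  assumes legal: "\<And>j H. A j H \<subseteq> {1..n} \<times> {1..n}"
  shows "\<exists>r\<in>inputs n. fact n \<le> card (cls n A j r) * P n A j r"
proof (induction j)
  case 0
  have "cls n A 0 r = inputs n" for r by (auto simp: cls_def)
  moreover obtain r where "r \<in> inputs n"
    using card_inputs[of n] by (metis card.empty ex_in_conv fact_nonzero)
  ultimately show ?case by (auto simp: P_def card_inputs)
next
  case (Suc j)
  then obtain r where r: "r \<in> inputs n" and IH: "fact n \<le> card (cls n A j r) * P n A j r" by blast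
  define C where "C = cls n A j r"
  define H where "H = hist A r j"
  define M where "M = qs A j H"
  have finM: "finite (M i)" for i
    by (rule finite_subset[of _ "{1..n}"]) (use legal in \<open>auto simp: M_def qs_def\<close>)
  define g where "g = (\<lambda>x. restrict (\<lambda>i. code (M i) (x i)) {1..n})"
  define T where "T = PiE {1..n} (\<lambda>i. codes (M i))"
  have finC: "finite C" unfolding C_def cls_def using finite_inputs by simp
  have finT: "finite T" unfolding T_def codes_def using finM by (intro finite_PiE) auto
  have gT: "g ` C \<subseteq> T" unfolding g_def T_def using code_in[OF finM] by auto
  have "C \<noteq> {}" using IH unfolding C_def by (metis fact_nonzero le_0_eq mult_is_0 card.empty)
  from pigeon[OF finC finT gT this] obtain x where x: "x \<in> C"
    and px: "card C \<le> card {y\<in>C. g y = g x} * card T" by blast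
  have cardT: "card T \<le> W n A j H"
    unfolding T_def W_def card_PiE[OF finite_atLeastAtMost] M_def
    by (rule prod_mono) (use card_codes finM M_def in auto)
  have xin: "x \<in> inputs n" and xh: "\<And>j'. j' \<le> j \<Longrightarrow> hist A x j' = hist A r j'"
    using x by (auto simp: C_def cls_def)
  have sub: "{y\<in>C. g y = g x} \<subseteq> cls n A (Suc j) x"
  proof
    fix y assume y: "y \<in> {y\<in>C. g y = g x}"
    then have yin: "y \<in> inputs n" and yh: "\<And>j'. j' \<le> j \<Longrightarrow> hist A y j' = hist A r j'"
      by (auto simp: C_def cls_def)
    have gy: "\<And>i. i \<in> {1..n} \<Longrightarrow> code (M i) (y i) = code (M i) (x i)"
      using y by (auto simp: g_def restrict_def fun_eq_iff) (metis)
    have hj: "hist A y j = hist A x j" using xh yh by simp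
    have "\<forall>q\<in>A j H. ans y q = ans x q"
    proof
      fix q assume q: "q \<in> A j H"
      obtain i m where qim: "q = (i,m)" by force
      have i: "i \<in> {1..n}" using legal q qim by blast
      have "m \<in> M i" using q qim by (simp add: M_def qs_def)
      from code_eq[OF finM gy[OF i] this] show "ans y q = ans x q" by (simp add: qim)
    qed
    moreover have "hist A y (Suc j) = H ++ (\<lambda>q. if q \<in> A j H then Some (ans y q) else None)"
      using yh[of j] by (simp add: H_def)
    moreover have "hist A x (Suc j) = H ++ (\<lambda>q. if q \<in> A j H then Some (ans x q) else None)"
      using xh[of j] by (simp add: H_def)
    moreover have "(\<lambda>q. if q \<in> A j H then Some (ans y q) else None) = (\<lambda>q. if q \<in> A j H then Some (ans x q) else None)"
      using calculation(1) by (intro ext) simp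
    ultimately have "hist A y (Suc j) = hist A x (Suc j)"
      by simp
    then show "y \<in> cls n A (Suc j) x" using yin xh yh by (auto simp: cls_def le_Suc_eq)
  qed
  have fincls: "finite (cls n A (Suc j) x)" unfolding cls_def using finite_inputs by simp
  have Pxr: "P n A j x = P n A j r" unfolding P_def by (rule prod.cong) (auto simp: xh)
  have Px: "P n A (Suc j) x = P n A j r * W n A j H"
    using Pxr xh[of j] by (simp add: P_def H_def)
  have cs: "card {y\<in>C. g y = g x} \<le> card (cls n A (Suc j) x)" by (rule card_mono[OF fincls sub])
  have "fact n \<le> card C * P n A j r" using IH by (simp add: C_def)
  also have "\<dots> \<le> card {y\<in>C. g y = g x} * card T * P n A j r" using px by (rule mult_le_mono1)
  also have "\<dots> \<le> card (cls n A (Suc j) x) * W n A j H * P n A j r"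
    by (intro mult_le_mono1 mult_le_mono cs cardT)
  also have "\<dots> = card (cls n A (Suc j) x) * P n A (Suc j) x" using Px by simp
  finally show ?case using xin by blast
qed




lemma tangent: "(x::real) \<ge> 1 \<Longrightarrow> t > 0 \<Longrightarrow> t * (ln x - ln t + 1) \<le> x"
proof -
  assume x: "x \<ge> 1" and t: "t > 0"
  have "ln (x / t) \<le> x / t - 1" by (rule ln_le_minus_one) (use x t in simp)
  then have "ln x - ln t \<le> x / t - 1" using x t by (simp add: ln_div)
  then have "t * (ln x - ln t + 1) \<le> t * (x / t)" using t by (intro mult_left_mono) auto
  then show ?thesis using t by simp
qed

lemma sum_bound:
  fixes a :: "nat \<Rightarrow> nat \<Rightarrow> nat"
  assumes F: "fact n \<le> (\<Prod>j<k. \<Prod>i\<in>{1..n}. 2 * a j i + 1)" and k: "k \<ge> 1" and n: "n \<ge> 1"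
  shows "real k / (2 * exp 1) * real n powr (1 + 1 / real k) - real k * real n
          \<le> real (\<Sum>j<k. \<Sum>i\<in>{1..n}. a j i)"
proof -
  define t where "t = real n powr (1 / real k) / exp 1"
  have t0: "t > 0" using n by (simp add: t_def)
  have lnt: "ln t = ln (real n) / real k - 1"
    using n by (simp add: t_def ln_div ln_powr)
  define b where "b = (\<lambda>j i. real (2 * a j i + 1))"
  have b1: "b j i \<ge> 1" for j i by (simp add: b_def)
  have b0: "b j i \<noteq> 0" for j i by (simp add: b_def)
  have bp: "b j i > 0" for j i by (simp add: b_def)
  have f1: "(\<Sum>j<k. \<Sum>i\<in>{1..n}. t * (ln (b j i) - ln t + 1)) \<le> (\<Sum>j<k. \<Sum>i\<in>{1..n}. b j i)"
    by (intro sum_mono tangent b1 t0)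
  have f2: "(\<Sum>j<k. \<Sum>i\<in>{1..n}. t * (ln (b j i) - ln t + 1))
      = t * (\<Sum>j<k. \<Sum>i\<in>{1..n}. ln (b j i)) - t * real k * real n * (ln t - 1)"
    by (simp add: sum_distrib_left sum_subtractf sum.distrib algebra_simps)
  have f3: "(\<Sum>j<k. \<Sum>i\<in>{1..n}. ln (b j i)) = ln (\<Prod>j<k. \<Prod>i\<in>{1..n}. b j i)"
  proof -
    have "(\<Sum>j<k. \<Sum>i\<in>{1..n}. ln (b j i)) = (\<Sum>j<k. ln (\<Prod>i\<in>{1..n}. b j i))"
      by (intro sum.cong refl, subst ln_prod) (use b0 in auto)
    also have "\<dots> = ln (\<Prod>j<k. \<Prod>i\<in>{1..n}. b j i)"
      by (rule ln_prod[symmetric]) (simp_all add: b0)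
    finally show ?thesis .
  qed
  have f4: "ln (fact n) \<le> ln (\<Prod>j<k. \<Prod>i\<in>{1..n}. b j i)"
  proof -
    have "real (fact n) \<le> real (\<Prod>j<k. \<Prod>i\<in>{1..n}. 2 * a j i + 1)" using F by (simp only: of_nat_le_iff)
    then have "fact n \<le> (\<Prod>j<k. \<Prod>i\<in>{1..n}. b j i)" by (simp add: b_def)
    moreover have "(0::real) < fact n" by simp
    moreover have "(0::real) < (\<Prod>j<k. \<Prod>i\<in>{1..n}. b j i)" by (intro prod_pos) (simp add: bp)
    ultimately show ?thesis by (subst ln_le_cancel_iff) auto
  qed
  note f5 = ln_fact_ge[of n]
  have f6: "(\<Sum>j<k. \<Sum>i\<in>{1..n}. b j i) = 2 * real (\<Sum>j<k. \<Sum>i\<in>{1..n}. a j i) + real k * real n"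
    by (simp add: b_def sum.distrib sum_distrib_left)
  have "t * (real n * ln (real n) - real n) \<le> t * (\<Sum>j<k. \<Sum>i\<in>{1..n}. ln (b j i))"
    using t0 f3 f4 f5 by (intro mult_left_mono) auto
  then have "t * (real n * ln (real n) - real n) - t * real k * real n * (ln t - 1)
      \<le> 2 * real (\<Sum>j<k. \<Sum>i\<in>{1..n}. a j i) + real k * real n"
    using f1 f2 f6 by linarith
  moreover have "t * (real n * ln (real n) - real n) - t * real k * real n * (ln t - 1)
      = t * real k * real n + t * real n * (real k - 1)"
  proof -
    have kk: "real k * (ln (real n) / real k) = ln (real n)" using k by simp
    have "t * (real n * ln (real n) - real n) - t * real k * real n * (ln t - 1)
       = t * real n * ln (real n) - t * real n - t * real n * (real k * (ln (real n) / real k)) + 2 * t * real k * real n"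
      by (simp add: lnt algebra_simps)
    also have "\<dots> = t * real k * real n + t * real n * (real k - 1)"
      by (simp only: kk) (simp add: algebra_simps)
    finally show ?thesis .
  qed
  moreover have "t * real n * (real k - 1) \<ge> 0" using t0 k by simp
  ultimately have "t * real k * real n \<le> 2 * real (\<Sum>j<k. \<Sum>i\<in>{1..n}. a j i) + real k * real n"
    by linarith
  moreover have "real k / (2 * exp 1) * real n powr (1 + 1 / real k) = t * real k * real n / 2"
    using n by (simp add: t_def powr_add field_simps)
  moreover have "real k * real n \<ge> 0" by simp
  ultimately show ?thesis by linarith
qed




lemma hist_mem: "q \<in> A j (hist A r j) \<Longrightarrow> j < k \<Longrightarrow> hist A r k q = Some (ans r q)"
proof (induction k)
  case 0 then show ?case by simp
next
  case (Suc k)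
  show ?case
  proof (cases "j = k")
    case True then show ?thesis using Suc.prems by (simp add: map_add_def)
  next
    case False
    then have "hist A r k q = Some (ans r q)" using Suc by simp
    then show ?thesis by (simp add: map_add_def)
  qed
qed

lemma exists_sorter: "k \<ge> 1 \<Longrightarrow> sorts_in_rounds n k (\<lambda>j H. {1..n} \<times> {1..n})"
  unfolding sorts_in_rounds_def
proof (intro conjI ballI impI allI)
  fix j :: nat and H :: "nat \<times> nat \<Rightarrow> answer option"
  show "(\<lambda>j H. {1..n} \<times> {1..n}) j H \<subseteq> {1..n} \<times> {1..n}" by simp
next
  fix r r' assume k: "k \<ge> 1" and r: "r \<in> inputs n" and r': "r' \<in> inputs n"
    and h: "hist (\<lambda>j H. {1..n} \<times> {1..n}) r k = hist (\<lambda>j H. {1..n} \<times> {1..n}) r' k"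
  show "r = r'"
  proof
    fix i show "r i = r' i"
    proof (cases "i \<in> {1..n}")
      case False then show ?thesis using r r' by (simp add: inputs_def)
    next
      case True
      have ri: "r i \<in> {1..n}" using r True by (auto simp: inputs_def bij_betw_def)
      have "hist (\<lambda>j H. {1..n} \<times> {1..n}) r k (i, r i) = Some (ans r (i, r i))"
        by (rule hist_mem[where j=0]) (use True ri k in auto)
      moreover have "hist (\<lambda>j H. {1..n} \<times> {1..n}) r' k (i, r i) = Some (ans r' (i, r i))"
        by (rule hist_mem[where j=0]) (use True ri k in auto)
      ultimately have "ans r (i, r i) = ans r' (i, r i)" using h by simp
      then show ?thesis by (simp split: if_splits)
    qed
  qed
qed

lemma card_split:
  fixes Q :: "(nat \<times> nat) set"
  assumes "Q \<subseteq> {1..n} \<times> {1..n}"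
  shows "card Q = (\<Sum>i\<in>{1..n}. card {m. (i, m) \<in> Q})"
proof -
  have fin: "finite {m. (i,m) \<in> Q}" for i by (rule finite_subset[of _ "{1..n}"]) (use assms in auto)
  have "Q = Sigma {1..n} (\<lambda>i. {m. (i, m) \<in> Q})" using assms by auto
  then have "card Q = card (Sigma {1..n} (\<lambda>i. {m. (i, m) \<in> Q}))" by (rule arg_cong)
  also have "\<dots> = (\<Sum>i\<in>{1..n}. card {m. (i, m) \<in> Q})"
    by (rule card_SigmaI) (simp_all add: fin)
  finally show ?thesis .
qed

theorem theorem6:
  fixes k n :: nat
  assumes "k \<ge> 1" and "n \<ge> 1"
  shows "real (c k n) \<ge> real k / (2 * exp 1) * real n powr (1 + 1 / real k) - real k * real n"
proof -
  define S where "S = {worst_cost n k A | A. sorts_in_rounds n k A}"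
  have "S \<noteq> {}" using exists_sorter[OF assms(1), of n] by (auto simp: S_def)
  then have "Inf S \<in> S" by (rule Inf_nat_def1)
  then obtain A where A: "sorts_in_rounds n k A" and cA: "c k n = worst_cost n k A"
    by (auto simp: S_def c_def)
  have legal: "\<And>j H. A j H \<subseteq> {1..n} \<times> {1..n}" using A by (simp add: sorts_in_rounds_def)
  obtain r where r: "r \<in> inputs n" and F: "fact n \<le> card (cls n A k r) * P n A k r"
    using adversary[where A=A and n=n and j=k, OF legal] by blast
  have "cls n A k r \<subseteq> {r}"
    using A r by (auto simp: cls_def sorts_in_rounds_def)
  then have "card (cls n A k r) \<le> 1" using card_mono[of "{r}"] by simp
  then have "fact n \<le> P n A k r" using F
    by (metis dual_order.trans mult_le_mono1 mult_1)
  then have F2: "fact n \<le> (\<Prod>j<k. \<Prod>i\<in>{1..n}. 2 * card (qs A j (hist A r j) i) + 1)"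
    by (simp add: P_def W_def)
  have costeq: "cost A r k = (\<Sum>j<k. \<Sum>i\<in>{1..n}. card (qs A j (hist A r j) i))"
    unfolding cost_def qs_def by (intro sum.cong refl card_split legal)
  have "real k / (2 * exp 1) * real n powr (1 + 1 / real k) - real k * real n \<le> real (cost A r k)"
    using sum_bound[OF F2 assms] costeq by simp
  also have "cost A r k \<le> worst_cost n k A"
    unfolding worst_cost_def by (rule Max_ge) (use r finite_inputs in auto)
  finally show ?thesis using cA by simp
qed


end
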